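(* Let $\mathbf{V}$ be a vertical weak adhesive HLR category with respect to a stable system of monics $\mathcal{M}$. If pushouts along $\mathcal{M}$-morphisms are stable under pullbacks in $\mathbf{V}$, then $\mathbf{V}$ is also a horizontal weak adhesive HLR category with respect to $\mathcal{M}$ (and hence a weak adhesive HLR category).
   Context: A stable system of monics $\mathcal{M}$: class of monomorphisms containing all isomorphisms, closed under composition, stable under pullback. Van Kampen (VK) square: a pushout square (bottom face) such that for every commutative cube over it whose two back vertical faces (those containing the vertical morphism into the apex of the span) are pullbacks, the top face is a pushout iff the two front vertical faces are pullbacks. A vertical weak VK square: the same condition required only for cubes whose four vertical morphisms are in $\mathcal{M}$. $\mathbf{V}$ is a vertical weak adhesive HLR category w.r.t. $\mathcal{M}$ if (V-i) it has pullbacks of cospans $A\to B\leftarrow B'$ with $B'\to B$ in $\mathcal{M}$, (V-ii) it has pushouts of spans $A\leftarrow B\to B'$ with $B\to B'$ in $\mathcal{M}$, and in such pushouts the morphism opposite to the $\mathcal{M}$-leg is in $\mathcal{M}$, (V-iii) pushouts along $\mathcal{M}$-morphisms are vertical weak VK squares. It is a horizontal weak adhesive HLR category w.r.t. $\mathcal{M}$ if it satisfies (V-i), (V-ii) and (H-iii): every pushout square all four of whose morphisms are in $\mathcal{M}$ is a VK square. A weak adhesive HLR category is one that is both. "Pushouts along $\mathcal{M}$-morphisms are stable under pullbacks": for every commutative cube whose bottom face is a pushout of a span with one leg in $\mathcal{M}$ and whose four vertical faces are pullbacks (vertical morphisms arbitrary), the top face is a pushout. *)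

theory Defs
  imports Main
begin

text \<open>A (small-or-large) category given explicitly by a set of objects, a set of
arrows, domain/codomain maps, composition (Comp g f = g after f) and identities.\<close>

record ('o, 'a) cat =
  Ob :: "'o set"
  Arr :: "'a set"
  Dom :: "'a \<Rightarrow> 'o"
  Cod :: "'a \<Rightarrow> 'o"
  Comp :: "'a \<Rightarrow> 'a \<Rightarrow> 'a"
  Id :: "'o \<Rightarrow> 'a"

definition category :: "('o, 'a) cat \<Rightarrow> bool" where
  "category C \<longleftrightarrow>
     (\<forall>f\<in>Arr C. Dom C f \<in> Ob C \<and> Cod C f \<in> Ob C) \<and>
     (\<forall>x\<in>Ob C. Id C x \<in> Arr C \<and> Dom C (Id C x) = x \<and> Cod C (Id C x) = x) \<and>
     (\<forall>f\<in>Arr C. \<forall>g\<in>Arr C. Cod C f = Dom C g \<longrightarrow>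
        Comp C g f \<in> Arr C \<and> Dom C (Comp C g f) = Dom C f \<and> Cod C (Comp C g f) = Cod C g) \<and>
     (\<forall>f\<in>Arr C. \<forall>g\<in>Arr C. \<forall>h\<in>Arr C. Cod C f = Dom C g \<longrightarrow> Cod C g = Dom C h \<longrightarrow>
        Comp C h (Comp C g f) = Comp C (Comp C h g) f) \<and>
     (\<forall>f\<in>Arr C. Comp C f (Id C (Dom C f)) = f \<and> Comp C (Id C (Cod C f)) f = f)"

definition is_mono :: "('o, 'a) cat \<Rightarrow> 'a \<Rightarrow> bool" where
  "is_mono C m \<longleftrightarrow> m \<in> Arr C \<and>
     (\<forall>f\<in>Arr C. \<forall>g\<in>Arr C. Cod C f = Dom C m \<longrightarrow> Cod C g = Dom C m \<longrightarrow> Dom C f = Dom C g \<longrightarrow>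
        Comp C m f = Comp C m g \<longrightarrow> f = g)"

definition iso :: "('o, 'a) cat \<Rightarrow> 'a \<Rightarrow> bool" where
  "iso C f \<longleftrightarrow> f \<in> Arr C \<and>
     (\<exists>g\<in>Arr C. Dom C g = Cod C f \<and> Cod C g = Dom C f \<and>
        Comp C g f = Id C (Dom C f) \<and> Comp C f g = Id C (Cod C f))"

text \<open>Commutative square
   A --f--> B
   |g       |h
   v        v
   C --k--> D      with  h o f = k o g.\<close>

definition commsq :: "('o, 'a) cat \<Rightarrow> 'a \<Rightarrow> 'a \<Rightarrow> 'a \<Rightarrow> 'a \<Rightarrow> bool" where
  "commsq C f g h k \<longleftrightarrow> f \<in> Arr C \<and> g \<in> Arr C \<and> h \<in> Arr C \<and> k \<in> Arr C \<and>
     Dom C f = Dom C g \<and> Cod C f = Dom C h \<and> Cod C g = Dom C k \<and> Cod C h = Cod C k \<and>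
     Comp C h f = Comp C k g"

definition pullback :: "('o, 'a) cat \<Rightarrow> 'a \<Rightarrow> 'a \<Rightarrow> 'a \<Rightarrow> 'a \<Rightarrow> bool" where
  "pullback C f g h k \<longleftrightarrow> commsq C f g h k \<and>
     (\<forall>x\<in>Arr C. \<forall>y\<in>Arr C. Dom C x = Dom C y \<longrightarrow> Cod C x = Dom C h \<longrightarrow> Cod C y = Dom C k \<longrightarrow>
        Comp C h x = Comp C k y \<longrightarrow>
        (\<exists>!u. u \<in> Arr C \<and> Dom C u = Dom C x \<and> Cod C u = Dom C f \<and>
              Comp C f u = x \<and> Comp C g u = y))"

definition pushout :: "('o, 'a) cat \<Rightarrow> 'a \<Rightarrow> 'a \<Rightarrow> 'a \<Rightarrow> 'a \<Rightarrow> bool" where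
  "pushout C f g h k \<longleftrightarrow> commsq C f g h k \<and>
     (\<forall>x\<in>Arr C. \<forall>y\<in>Arr C. Cod C x = Cod C y \<longrightarrow> Dom C x = Cod C f \<longrightarrow> Dom C y = Cod C g \<longrightarrow>
        Comp C x f = Comp C y g \<longrightarrow>
        (\<exists>!u. u \<in> Arr C \<and> Dom C u = Cod C h \<and> Cod C u = Cod C x \<and>
              Comp C u h = x \<and> Comp C u k = y))"

definition stable_system_of_monics :: "('o, 'a) cat \<Rightarrow> 'a set \<Rightarrow> bool" where
  "stable_system_of_monics C M \<longleftrightarrow>
     (\<forall>m\<in>M. is_mono C m) \<and>
     (\<forall>f. iso C f \<longrightarrow> f \<in> M) \<and>
     (\<forall>f\<in>M. \<forall>g\<in>M. Cod C f = Dom C g \<longrightarrow> Comp C g f \<in> M) \<and>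
     (\<forall>f g h k. pullback C f g h k \<longrightarrow> k \<in> M \<longrightarrow> f \<in> M)"

text \<open>Bottom face: A --f--> B, A --g--> C, B --h--> D, C --k--> D.
  Top face: A' --f'--> B', A' --g'--> C', B' --h'--> D', C' --k'--> D'.
  Vertical morphisms a : A' -> A, b : B' -> B, c : C' -> C, d : D' -> D.\<close>
definition cube :: "('o, 'a) cat \<Rightarrow> 'a \<Rightarrow> 'a \<Rightarrow> 'a \<Rightarrow> 'a \<Rightarrow> 'a \<Rightarrow> 'a \<Rightarrow> 'a \<Rightarrow> 'a
                     \<Rightarrow> 'a \<Rightarrow> 'a \<Rightarrow> 'a \<Rightarrow> 'a \<Rightarrow> bool" where
  "cube C f g h k f' g' h' k' a b c d \<longleftrightarrow>
     commsq C f g h k \<and> commsq C f' g' h' k' \<and>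
     commsq C f' a b f \<and> commsq C g' a c g \<and>
     commsq C h' b d h \<and> commsq C k' c d k"

text \<open>VK condition for the bottom square, restricted to cubes whose vertical
  morphisms satisfy P. Back faces (containing a) are (f',a,b,f) and (g',a,c,g);
  front faces are (h',b,d,h) and (k',c,d,k).\<close>
definition VK_wrt :: "('o, 'a) cat \<Rightarrow> ('a \<Rightarrow> 'a \<Rightarrow> 'a \<Rightarrow> 'a \<Rightarrow> bool)
                        \<Rightarrow> 'a \<Rightarrow> 'a \<Rightarrow> 'a \<Rightarrow> 'a \<Rightarrow> bool" where
  "VK_wrt C P f g h k \<longleftrightarrow> pushout C f g h k \<and>
     (\<forall>f' g' h' k' a b c d.
        cube C f g h k f' g' h' k' a b c d \<longrightarrow> P a b c d \<longrightarrow>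
        pullback C f' a b f \<longrightarrow> pullback C g' a c g \<longrightarrow>
        (pushout C f' g' h' k' \<longleftrightarrow> (pullback C h' b d h \<and> pullback C k' c d k)))"

definition VK_square :: "('o, 'a) cat \<Rightarrow> 'a \<Rightarrow> 'a \<Rightarrow> 'a \<Rightarrow> 'a \<Rightarrow> bool" where
  "VK_square C f g h k \<longleftrightarrow> VK_wrt C (\<lambda>a b c d. True) f g h k"

definition vertical_weak_VK_square :: "('o, 'a) cat \<Rightarrow> 'a set \<Rightarrow> 'a \<Rightarrow> 'a \<Rightarrow> 'a \<Rightarrow> 'a \<Rightarrow> bool" where
  "vertical_weak_VK_square C M f g h k \<longleftrightarrow>
     VK_wrt C (\<lambda>a b c d. a \<in> M \<and> b \<in> M \<and> c \<in> M \<and> d \<in> M) f g h k"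

definition has_M_pullbacks :: "('o, 'a) cat \<Rightarrow> 'a set \<Rightarrow> bool" where
  "has_M_pullbacks C M \<longleftrightarrow>
     (\<forall>h\<in>Arr C. \<forall>k\<in>M. Cod C h = Cod C k \<longrightarrow> (\<exists>f g. pullback C f g h k))"

definition has_M_pushouts :: "('o, 'a) cat \<Rightarrow> 'a set \<Rightarrow> bool" where
  "has_M_pushouts C M \<longleftrightarrow>
     (\<forall>f\<in>M. \<forall>g\<in>Arr C. Dom C f = Dom C g \<longrightarrow> (\<exists>h k. pushout C f g h k)) \<and>
     (\<forall>f g h k. pushout C f g h k \<longrightarrow> f \<in> M \<longrightarrow> k \<in> M)"

definition vertical_weak_adhesive_HLR :: "('o, 'a) cat \<Rightarrow> 'a set \<Rightarrow> bool" where
  "vertical_weak_adhesive_HLR C M \<longleftrightarrow>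
     has_M_pullbacks C M \<and> has_M_pushouts C M \<and>
     (\<forall>f g h k. pushout C f g h k \<longrightarrow> f \<in> M \<longrightarrow> vertical_weak_VK_square C M f g h k)"

definition horizontal_weak_adhesive_HLR :: "('o, 'a) cat \<Rightarrow> 'a set \<Rightarrow> bool" where
  "horizontal_weak_adhesive_HLR C M \<longleftrightarrow>
     has_M_pullbacks C M \<and> has_M_pushouts C M \<and>
     (\<forall>f g h k. pushout C f g h k \<longrightarrow> f \<in> M \<longrightarrow> g \<in> M \<longrightarrow> h \<in> M \<longrightarrow> k \<in> M \<longrightarrow>
        VK_square C f g h k)"

definition weak_adhesive_HLR :: "('o, 'a) cat \<Rightarrow> 'a set \<Rightarrow> bool" where
  "weak_adhesive_HLR C M \<longleftrightarrow>
     vertical_weak_adhesive_HLR C M \<and> horizontal_weak_adhesive_HLR C M"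

definition M_pushouts_pullback_stable :: "('o, 'a) cat \<Rightarrow> 'a set \<Rightarrow> bool" where
  "M_pushouts_pullback_stable C M \<longleftrightarrow>
     (\<forall>f g h k f' g' h' k' a b c d.
        cube C f g h k f' g' h' k' a b c d \<longrightarrow> pushout C f g h k \<longrightarrow> f \<in> M \<longrightarrow>
        pullback C f' a b f \<longrightarrow> pullback C g' a c g \<longrightarrow>
        pullback C h' b d h \<longrightarrow> pullback C k' c d k \<longrightarrow>
        pushout C f' g' h' k')"

end

theory Submission
  imports Defs
begin

context
  fixes C :: "('o, 'a) cat"
  assumes cat: "category C"
begin

lemma ar_dc: "f \<in> Arr C \<Longrightarrow> Dom C f \<in> Ob C \<and> Cod C f \<in> Ob C"
  using cat unfolding category_def by blast

lemma id_ar: "x \<in> Ob C \<Longrightarrow> Id C x \<in> Arr C" "x \<in> Ob C \<Longrightarrow> Dom C (Id C x) = x"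
  "x \<in> Ob C \<Longrightarrow> Cod C (Id C x) = x"
  using cat unfolding category_def by blast+

lemma comp_ar: "f \<in> Arr C \<Longrightarrow> g \<in> Arr C \<Longrightarrow> Cod C f = Dom C g \<Longrightarrow> Comp C g f \<in> Arr C"
  "f \<in> Arr C \<Longrightarrow> g \<in> Arr C \<Longrightarrow> Cod C f = Dom C g \<Longrightarrow> Dom C (Comp C g f) = Dom C f"
  "f \<in> Arr C \<Longrightarrow> g \<in> Arr C \<Longrightarrow> Cod C f = Dom C g \<Longrightarrow> Cod C (Comp C g f) = Cod C g"
  using cat unfolding category_def by blast+

lemma assoc: "f \<in> Arr C \<Longrightarrow> g \<in> Arr C \<Longrightarrow> h \<in> Arr C \<Longrightarrow> Cod C f = Dom C g \<Longrightarrow> Cod C g = Dom C h \<Longrightarrow>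
   Comp C h (Comp C g f) = Comp C (Comp C h g) f"
  using cat unfolding category_def by blast

lemma id_l: "f \<in> Arr C \<Longrightarrow> Comp C (Id C (Cod C f)) f = f"
  and id_r: "f \<in> Arr C \<Longrightarrow> Comp C f (Id C (Dom C f)) = f"
  using cat unfolding category_def by blast+

lemma id_l': "f \<in> Arr C \<Longrightarrow> Cod C f = x \<Longrightarrow> Comp C (Id C x) f = f"
  using id_l by blast
lemma id_r': "f \<in> Arr C \<Longrightarrow> Dom C f = x \<Longrightarrow> Comp C f (Id C x) = f"
  using id_r by blast

lemma iso_id: "x \<in> Ob C \<Longrightarrow> iso C (Id C x)"
  unfolding iso_def using id_ar id_l'[of "Id C x" x] by (intro conjI bexI[of _ "Id C x"]) auto

lemma commsq_T: "commsq C f g h k = commsq C g f k h"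
  unfolding commsq_def by auto

lemma pullback_T1: "pullback C f g h k \<Longrightarrow> pullback C g f k h"
proof -
  assume pb: "pullback C f g h k"
  hence cs: "commsq C f g h k" unfolding pullback_def by blast
  show ?thesis unfolding pullback_def
  proof (intro conjI ballI impI)
    show "commsq C g f k h" using cs commsq_T by blast
    fix x y assume xy: "x \<in> Arr C" "y \<in> Arr C" "Dom C x = Dom C y" "Cod C x = Dom C k" "Cod C y = Dom C h"
      "Comp C k x = Comp C h y"
    have U: "\<forall>x\<in>Arr C. \<forall>y\<in>Arr C. Dom C x = Dom C y \<longrightarrow> Cod C x = Dom C h \<longrightarrow> Cod C y = Dom C k \<longrightarrow>
        Comp C h x = Comp C k y \<longrightarrow>
        (\<exists>!u. u \<in> Arr C \<and> Dom C u = Dom C x \<and> Cod C u = Dom C f \<and> Comp C f u = x \<and> Comp C g u = y)"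
      using pb unfolding pullback_def by blast
    have "\<exists>!u. u \<in> Arr C \<and> Dom C u = Dom C y \<and> Cod C u = Dom C f \<and> Comp C f u = y \<and> Comp C g u = x"
      using U[rule_format, OF xy(2) xy(1)] xy by simp
    then obtain u where u: "u \<in> Arr C \<and> Dom C u = Dom C y \<and> Cod C u = Dom C f \<and> Comp C f u = y \<and> Comp C g u = x"
      and uq: "\<forall>w. w \<in> Arr C \<and> Dom C w = Dom C y \<and> Cod C w = Dom C f \<and> Comp C f w = y \<and> Comp C g w = x \<longrightarrow> w = u"
      unfolding Ex1_def by blast
    have fg: "Dom C f = Dom C g" using cs unfolding commsq_def by blast
    show "\<exists>!u. u \<in> Arr C \<and> Dom C u = Dom C x \<and> Cod C u = Dom C g \<and> Comp C g u = x \<and> Comp C f u = y"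
    proof (rule ex1I[of _ u])
      show "u \<in> Arr C \<and> Dom C u = Dom C x \<and> Cod C u = Dom C g \<and> Comp C g u = x \<and> Comp C f u = y"
        using u fg xy(3) by simp
      fix w assume "w \<in> Arr C \<and> Dom C w = Dom C x \<and> Cod C w = Dom C g \<and> Comp C g w = x \<and> Comp C f w = y"
      then show "w = u" using uq fg xy(3) by simp
    qed
  qed
qed

lemma pullback_T: "pullback C f g h k = pullback C g f k h"
  using pullback_T1 by blast

lemma pushout_T1: "pushout C f g h k \<Longrightarrow> pushout C g f k h"
proof -
  assume pb: "pushout C f g h k"
  hence cs: "commsq C f g h k" unfolding pushout_def by blast
  show ?thesis unfolding pushout_def
  proof (intro conjI ballI impI)
    show "commsq C g f k h" using cs commsq_T by blast
    fix x y assume xy: "x \<in> Arr C" "y \<in> Arr C" "Cod C x = Cod C y" "Dom C x = Cod C g" "Dom C y = Cod C f"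
      "Comp C x g = Comp C y f"
    have U: "\<forall>x\<in>Arr C. \<forall>y\<in>Arr C. Cod C x = Cod C y \<longrightarrow> Dom C x = Cod C f \<longrightarrow> Dom C y = Cod C g \<longrightarrow>
        Comp C x f = Comp C y g \<longrightarrow>
        (\<exists>!u. u \<in> Arr C \<and> Dom C u = Cod C h \<and> Cod C u = Cod C x \<and> Comp C u h = x \<and> Comp C u k = y)"
      using pb unfolding pushout_def by blast
    have "\<exists>!u. u \<in> Arr C \<and> Dom C u = Cod C h \<and> Cod C u = Cod C y \<and> Comp C u h = y \<and> Comp C u k = x"
      using U[rule_format, OF xy(2) xy(1)] xy by simp
    then obtain u where u: "u \<in> Arr C \<and> Dom C u = Cod C h \<and> Cod C u = Cod C y \<and> Comp C u h = y \<and> Comp C u k = x"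
      and uq: "\<forall>w. w \<in> Arr C \<and> Dom C w = Cod C h \<and> Cod C w = Cod C y \<and> Comp C w h = y \<and> Comp C w k = x \<longrightarrow> w = u"
      unfolding Ex1_def by blast
    have hk: "Cod C h = Cod C k" using cs unfolding commsq_def by blast
    show "\<exists>!u. u \<in> Arr C \<and> Dom C u = Cod C k \<and> Cod C u = Cod C x \<and> Comp C u k = x \<and> Comp C u h = y"
    proof (rule ex1I[of _ u])
      show "u \<in> Arr C \<and> Dom C u = Cod C k \<and> Cod C u = Cod C x \<and> Comp C u k = x \<and> Comp C u h = y"
        using u hk xy(3) by simp
      fix w assume "w \<in> Arr C \<and> Dom C w = Cod C k \<and> Cod C w = Cod C x \<and> Comp C w k = x \<and> Comp C w h = y"
      then show "w = u" using uq hk xy(3) by simp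
    qed
  qed
qed

lemma pushout_T: "pushout C f g h k = pushout C g f k h"
  using pushout_T1 by blast

lemma cube_T: "cube C f g h k f' g' h' k' a b c d \<Longrightarrow> cube C g f k h g' f' k' h' a c b d"
  unfolding cube_def using commsq_T by blast

lemma commsqD: assumes "commsq C f g h k"
  shows "f \<in> Arr C" "g \<in> Arr C" "h \<in> Arr C" "k \<in> Arr C" "Dom C g = Dom C f" "Dom C h = Cod C f"
    "Dom C k = Cod C g" "Cod C k = Cod C h" "Comp C h f = Comp C k g"
  using assms unfolding commsq_def by auto

lemma pb_cs: "pullback C f g h k \<Longrightarrow> commsq C f g h k"
  unfolding pullback_def by blast

lemma po_cs: "pushout C f g h k \<Longrightarrow> commsq C f g h k"
  unfolding pushout_def by blast

lemma pb_ex: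
  assumes "pullback C f g h k" "x \<in> Arr C" "y \<in> Arr C" "Dom C x = Dom C y" "Cod C x = Dom C h"
    "Cod C y = Dom C k" "Comp C h x = Comp C k y"
  obtains u where "u \<in> Arr C" "Dom C u = Dom C x" "Cod C u = Dom C f" "Comp C f u = x" "Comp C g u = y"
proof -
  have U: "\<forall>x\<in>Arr C. \<forall>y\<in>Arr C. Dom C x = Dom C y \<longrightarrow> Cod C x = Dom C h \<longrightarrow> Cod C y = Dom C k \<longrightarrow>
        Comp C h x = Comp C k y \<longrightarrow>
        (\<exists>!u. u \<in> Arr C \<and> Dom C u = Dom C x \<and> Cod C u = Dom C f \<and> Comp C f u = x \<and> Comp C g u = y)"
    using assms(1) unfolding pullback_def by blast
  have "\<exists>!u. u \<in> Arr C \<and> Dom C u = Dom C x \<and> Cod C u = Dom C f \<and> Comp C f u = x \<and> Comp C g u = y"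
    using U[rule_format, OF assms(2,3,4,5,6,7)] .
  then show ?thesis using that unfolding Ex1_def by blast
qed

lemma pb_uniq:
  assumes pb: "pullback C f g h k" and u: "u \<in> Arr C" "Cod C u = Dom C f"
    and v: "v \<in> Arr C" "Cod C v = Dom C f" "Dom C u = Dom C v"
    and e: "Comp C f u = Comp C f v" "Comp C g u = Comp C g v"
  shows "u = v"
proof -
  note cs = commsqD[OF pb_cs[OF pb]]
  have a1: "Comp C f u \<in> Arr C" "Comp C g u \<in> Arr C"
    using cs u comp_ar by auto
  have a2: "Dom C (Comp C f u) = Dom C u" "Dom C (Comp C g u) = Dom C u"
    "Cod C (Comp C f u) = Dom C h" "Cod C (Comp C g u) = Dom C k"
    using cs u comp_ar by auto
  have a3: "Comp C h (Comp C f u) = Comp C k (Comp C g u)"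
    using cs u assoc by metis
  have U: "\<forall>x\<in>Arr C. \<forall>y\<in>Arr C. Dom C x = Dom C y \<longrightarrow> Cod C x = Dom C h \<longrightarrow> Cod C y = Dom C k \<longrightarrow>
        Comp C h x = Comp C k y \<longrightarrow>
        (\<exists>!u. u \<in> Arr C \<and> Dom C u = Dom C x \<and> Cod C u = Dom C f \<and> Comp C f u = x \<and> Comp C g u = y)"
    using pb unfolding pullback_def by blast
  have "\<exists>!w. w \<in> Arr C \<and> Dom C w = Dom C (Comp C f u) \<and> Cod C w = Dom C f \<and>
              Comp C f w = Comp C f u \<and> Comp C g w = Comp C g u"
    using U[rule_format, OF a1(1,2)] a2 a3 by simp
  then obtain w where "\<forall>z. z \<in> Arr C \<and> Dom C z = Dom C (Comp C f u) \<and> Cod C z = Dom C f \<and>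
              Comp C f z = Comp C f u \<and> Comp C g z = Comp C g u \<longrightarrow> z = w"
    unfolding Ex1_def by blast
  then have "u = w" "v = w" using u v e a2 by auto
  then show ?thesis by simp
qed

lemma pb_paste:
  assumes s1: "pullback C t l1 r1 m" and s2: "pullback C m l2 r2 bt"
  shows "pullback C t (Comp C l2 l1) (Comp C r2 r1) bt"
proof -
  note c1 = commsqD[OF pb_cs[OF s1]] and c2 = commsqD[OF pb_cs[OF s2]]
  have L: "Comp C l2 l1 \<in> Arr C" "Dom C (Comp C l2 l1) = Dom C t" "Cod C (Comp C l2 l1) = Dom C bt"
    using c1 c2 comp_ar by auto
  have R: "Comp C r2 r1 \<in> Arr C" "Dom C (Comp C r2 r1) = Cod C t" "Cod C (Comp C r2 r1) = Cod C bt"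
    using c1 c2 comp_ar by auto
  have E: "Comp C (Comp C r2 r1) t = Comp C bt (Comp C l2 l1)"
  proof -
    have "Comp C (Comp C r2 r1) t = Comp C r2 (Comp C r1 t)" using c1 c2 assoc by metis
    also have "\<dots> = Comp C r2 (Comp C m l1)" using c1 by simp
    also have "\<dots> = Comp C (Comp C r2 m) l1" using c1 c2 assoc by metis
    also have "\<dots> = Comp C (Comp C bt l2) l1" using c2 by simp
    also have "\<dots> = Comp C bt (Comp C l2 l1)" using c1 c2 assoc by metis
    finally show ?thesis .
  qed
  show ?thesis unfolding pullback_def
  proof (intro conjI ballI impI)
    show "commsq C t (Comp C l2 l1) (Comp C r2 r1) bt" unfolding commsq_def using c1 c2 L R E by auto
    fix x y assume xy: "x \<in> Arr C" "y \<in> Arr C" "Dom C x = Dom C y" "Cod C x = Dom C (Comp C r2 r1)"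
      "Cod C y = Dom C bt" "Comp C (Comp C r2 r1) x = Comp C bt y"
    have rx: "Comp C r1 x \<in> Arr C" "Dom C (Comp C r1 x) = Dom C x" "Cod C (Comp C r1 x) = Dom C r2"
      using xy c1 c2 R comp_ar by auto
    have "Comp C r2 (Comp C r1 x) = Comp C bt y" using xy c1 c2 R assoc by metis
    then obtain v where v: "v \<in> Arr C" "Dom C v = Dom C x" "Cod C v = Dom C m" "Comp C m v = Comp C r1 x"
      "Comp C l2 v = y"
      using pb_ex[OF s2 rx(1) xy(2)] rx xy by metis
    obtain u where u: "u \<in> Arr C" "Dom C u = Dom C x" "Cod C u = Dom C t" "Comp C t u = x" "Comp C l1 u = v"
      using pb_ex[OF s1 xy(1) v(1)] v xy R c1 by metis
    have uy: "Comp C (Comp C l2 l1) u = y" using u v c1 c2 assoc by metis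
    show "\<exists>!u. u \<in> Arr C \<and> Dom C u = Dom C x \<and> Cod C u = Dom C t \<and> Comp C t u = x \<and> Comp C (Comp C l2 l1) u = y"
    proof (rule ex1I[of _ u])
      show "u \<in> Arr C \<and> Dom C u = Dom C x \<and> Cod C u = Dom C t \<and> Comp C t u = x \<and> Comp C (Comp C l2 l1) u = y"
        using u uy by blast
      fix w assume w: "w \<in> Arr C \<and> Dom C w = Dom C x \<and> Cod C w = Dom C t \<and> Comp C t w = x \<and> Comp C (Comp C l2 l1) w = y"
      have lw: "Comp C l1 w \<in> Arr C" "Cod C (Comp C l1 w) = Dom C m" "Dom C (Comp C l1 w) = Dom C x"
        using w c1 comp_ar by auto
      have e1: "Comp C m (Comp C l1 w) = Comp C m v"
      proof -
        have "Comp C m (Comp C l1 w) = Comp C (Comp C m l1) w" using w c1 assoc by metis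
        also have "\<dots> = Comp C (Comp C r1 t) w" using c1 by simp
        also have "\<dots> = Comp C r1 (Comp C t w)" using w c1 assoc by metis
        finally show ?thesis using w v by simp
      qed
      have e2: "Comp C l2 (Comp C l1 w) = Comp C l2 v" using w v c1 c2 assoc by metis
      have "Comp C l1 w = v" using pb_uniq[OF s2 lw(1,2) v(1,3)] lw v e1 e2 by simp
      then show "w = u" using pb_uniq[OF s1, of w u] w u by simp
    qed
  qed
qed

lemma pb_cancel:
  assumes s: "pullback C t (Comp C l2 l1) (Comp C r2 r1) bt" and s2: "pullback C m l2 r2 bt"
    and c: "commsq C t l1 r1 m"
  shows "pullback C t l1 r1 m"
proof -
  note c1 = commsqD[OF c] and c2 = commsqD[OF pb_cs[OF s2]]
  show ?thesis unfolding pullback_def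
  proof (intro conjI ballI impI)
    show "commsq C t l1 r1 m" by (fact c)
    fix x v assume xv: "x \<in> Arr C" "v \<in> Arr C" "Dom C x = Dom C v" "Cod C x = Dom C r1"
      "Cod C v = Dom C m" "Comp C r1 x = Comp C m v"
    have a: "Comp C l2 v \<in> Arr C" "Dom C (Comp C l2 v) = Dom C v" "Cod C (Comp C l2 v) = Dom C bt"
      using xv c2 comp_ar by auto
    have R: "Dom C (Comp C r2 r1) = Dom C r1" using c1 c2 comp_ar by auto
    have "Comp C (Comp C r2 r1) x = Comp C bt (Comp C l2 v)"
    proof -
      have "Comp C (Comp C r2 r1) x = Comp C r2 (Comp C r1 x)" using xv c1 c2 assoc by metis
      also have "\<dots> = Comp C r2 (Comp C m v)" using xv by simp
      also have "\<dots> = Comp C (Comp C r2 m) v" using xv c2 assoc by metis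
      also have "\<dots> = Comp C bt (Comp C l2 v)" using xv c2 assoc by metis
      finally show ?thesis .
    qed
    then obtain u where u: "u \<in> Arr C" "Dom C u = Dom C x" "Cod C u = Dom C t" "Comp C t u = x"
       "Comp C (Comp C l2 l1) u = Comp C l2 v"
      using pb_ex[OF s xv(1) a(1)] xv a R by metis
    have lu: "Comp C l1 u \<in> Arr C" "Cod C (Comp C l1 u) = Dom C m" "Dom C (Comp C l1 u) = Dom C v"
      using u c1 xv comp_ar by auto
    have e1: "Comp C m (Comp C l1 u) = Comp C m v"
    proof -
      have "Comp C m (Comp C l1 u) = Comp C (Comp C m l1) u" using u c1 assoc by metis
      also have "\<dots> = Comp C (Comp C r1 t) u" using c1 by simp
      also have "\<dots> = Comp C r1 (Comp C t u)" using u c1 assoc by metis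
      finally show ?thesis using u xv by simp
    qed
    have e2: "Comp C l2 (Comp C l1 u) = Comp C l2 v" using u c1 c2 assoc by metis
    have lv: "Comp C l1 u = v" using pb_uniq[OF s2 lu(1,2) xv(2,5)] lu e1 e2 by simp
    show "\<exists>!u. u \<in> Arr C \<and> Dom C u = Dom C x \<and> Cod C u = Dom C t \<and> Comp C t u = x \<and> Comp C l1 u = v"
    proof (rule ex1I[of _ u])
      show "u \<in> Arr C \<and> Dom C u = Dom C x \<and> Cod C u = Dom C t \<and> Comp C t u = x \<and> Comp C l1 u = v"
        using u lv by blast
      fix w assume w: "w \<in> Arr C \<and> Dom C w = Dom C x \<and> Cod C w = Dom C t \<and> Comp C t w = x \<and> Comp C l1 w = v"
      have "Comp C (Comp C l2 l1) w = Comp C l2 v" using w c1 c2 assoc by metis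
      then show "w = u" using pb_uniq[OF s, of w u] w u c1 comp_ar by auto
    qed
  qed
qed

end

context
  fixes C :: "('o, 'a) cat" and M :: "'a set"
  assumes cat: "category C"
    and stable: "stable_system_of_monics C M"
    and vert: "vertical_weak_adhesive_HLR C M"
    and stab: "M_pushouts_pullback_stable C M"
begin

lemma SM_mono: "m \<in> M \<Longrightarrow> is_mono C m"
  using stable unfolding stable_system_of_monics_def by blast
lemma SM_iso: "iso C f \<Longrightarrow> f \<in> M"
  using stable unfolding stable_system_of_monics_def by blast
lemma SM_comp: "f \<in> M \<Longrightarrow> g \<in> M \<Longrightarrow> Cod C f = Dom C g \<Longrightarrow> Comp C g f \<in> M"
  using stable unfolding stable_system_of_monics_def by blast
lemma SM_pb: "pullback C f g h k \<Longrightarrow> k \<in> M \<Longrightarrow> f \<in> M"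
  using stable unfolding stable_system_of_monics_def by blast
lemma has_pb: "h \<in> Arr C \<Longrightarrow> k \<in> M \<Longrightarrow> Cod C h = Cod C k \<Longrightarrow> \<exists>f g. pullback C f g h k"
  using vert unfolding vertical_weak_adhesive_HLR_def has_M_pullbacks_def by blast
lemma PO_M: "pushout C f g h k \<Longrightarrow> f \<in> M \<Longrightarrow> k \<in> M"
  using vert unfolding vertical_weak_adhesive_HLR_def has_M_pushouts_def by blast
lemma VV: "pushout C f g h k \<Longrightarrow> f \<in> M \<Longrightarrow> vertical_weak_VK_square C M f g h k"
  using vert unfolding vertical_weak_adhesive_HLR_def by blast

lemma mono_cancel_M:
  assumes m: "is_mono C m" and x: "x \<in> Arr C" "Cod C x = Dom C m" and mx: "Comp C m x \<in> M"
  shows "x \<in> M"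
proof -
  have marr: "m \<in> Arr C" using m unfolding is_mono_def by blast
  have dx: "Dom C x \<in> Ob C" using ar_dc[OF cat x(1)] by blast
  note I = id_ar[OF cat dx]
  have mxa: "Comp C m x \<in> Arr C" "Dom C (Comp C m x) = Dom C x" "Cod C (Comp C m x) = Cod C m"
    using comp_ar[OF cat] x marr by auto
  have "pullback C x (Id C (Dom C x)) m (Comp C m x)"
    unfolding pullback_def
  proof (intro conjI ballI impI)
    show "commsq C x (Id C (Dom C x)) m (Comp C m x)"
      unfolding commsq_def using I x marr mxa id_r'[OF cat mxa(1)] by auto
    fix p q assume pq: "p \<in> Arr C" "q \<in> Arr C" "Dom C p = Dom C q" "Cod C p = Dom C m"
      "Cod C q = Dom C (Comp C m x)" "Comp C m p = Comp C (Comp C m x) q"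
    have xq: "Comp C x q \<in> Arr C" "Dom C (Comp C x q) = Dom C q" "Cod C (Comp C x q) = Dom C m"
      using comp_ar[OF cat] pq x mxa by auto
    have "Comp C m (Comp C x q) = Comp C m p"
      using pq assoc[OF cat, of q x m] x marr mxa by simp
    hence xqp: "Comp C x q = p" using m xq pq unfolding is_mono_def by metis
    show "\<exists>!u. u \<in> Arr C \<and> Dom C u = Dom C p \<and> Cod C u = Dom C x \<and> Comp C x u = p \<and>
              Comp C (Id C (Dom C x)) u = q"
    proof (rule ex1I[of _ q])
      show "q \<in> Arr C \<and> Dom C q = Dom C p \<and> Cod C q = Dom C x \<and> Comp C x q = p \<and>
              Comp C (Id C (Dom C x)) q = q"
        using pq xqp mxa id_l'[OF cat pq(2)] by auto
      fix w assume "w \<in> Arr C \<and> Dom C w = Dom C p \<and> Cod C w = Dom C x \<and> Comp C x w = p \<and>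
              Comp C (Id C (Dom C x)) w = q"
      then show "w = q" using id_l'[OF cat, of w "Dom C x"] by auto
    qed
  qed
  then show ?thesis using SM_pb mx by blast
qed

lemma front_pb:
  assumes po: "pushout C f g h k" and M4: "f \<in> M" "g \<in> M" "h \<in> M" "k \<in> M"
    and cb: "cube C f g h k f' g' h' k' a b c d"
    and pb1: "pullback C f' a b f" and pb2: "pullback C g' a c g"
    and top: "pushout C f' g' h' k'"
  shows "pullback C h' b d h"
proof -
  have cbs: "commsq C f g h k" "commsq C f' g' h' k'" "commsq C f' a b f" "commsq C g' a c g"
     "commsq C h' b d h" "commsq C k' c d k" using cb unfolding cube_def by auto
  note B = commsqD[OF cat cbs(1)] and T = commsqD[OF cat cbs(2)] and F1 = commsqD[OF cat cbs(3)]
   and F2 = commsqD[OF cat cbs(4)] and F3 = commsqD[OF cat cbs(5)] and F4 = commsqD[OF cat cbs(6)]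
  note CA = comp_ar[OF cat] and AS = assoc[OF cat]
  obtain h2 b2 where P1: "pullback C h2 b2 d h" using has_pb[of d h] F3 M4 by metis
  obtain k2 c2 where P2: "pullback C k2 c2 d k" using has_pb[of d k] F4 M4 by metis
  note Q1 = commsqD[OF cat pb_cs[OF cat P1]] and Q2 = commsqD[OF cat pb_cs[OF cat P2]]
  obtain f2 a2 where P3: "pullback C f2 a2 b2 f" using has_pb[of b2 f] Q1 B M4 by metis
  note Q3 = commsqD[OF cat pb_cs[OF cat P3]]
  have x1: "Comp C h2 f2 \<in> Arr C" "Dom C (Comp C h2 f2) = Dom C f2" "Cod C (Comp C h2 f2) = Dom C d"
    using CA Q1 Q3 by auto
  have y1: "Comp C g a2 \<in> Arr C" "Dom C (Comp C g a2) = Dom C f2" "Cod C (Comp C g a2) = Dom C k"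
    using CA Q3 B by auto
  have e1: "Comp C d (Comp C h2 f2) = Comp C k (Comp C g a2)"
  proof -
    have "Comp C d (Comp C h2 f2) = Comp C (Comp C d h2) f2" using AS Q1 Q3 by metis
    also have "\<dots> = Comp C (Comp C h b2) f2" using Q1 by simp
    also have "\<dots> = Comp C h (Comp C b2 f2)" using AS Q1 Q3 by metis
    also have "\<dots> = Comp C h (Comp C f a2)" using Q3 by simp
    also have "\<dots> = Comp C (Comp C h f) a2" using AS Q3 B by metis
    also have "\<dots> = Comp C (Comp C k g) a2" using B by simp
    also have "\<dots> = Comp C k (Comp C g a2)" using AS Q3 B by metis
    finally show ?thesis .
  qed
  obtain g2 where g2: "g2 \<in> Arr C" "Dom C g2 = Dom C f2" "Cod C g2 = Dom C k2"
     "Comp C k2 g2 = Comp C h2 f2" "Comp C c2 g2 = Comp C g a2"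
    using pb_ex[OF cat P2 x1(1) y1(1)] x1 y1 e1 Q2 by metis
  have cs5: "commsq C a2 g2 g c2" unfolding commsq_def using g2 Q3 Q2 B by auto
  have "pullback C a2 (Comp C h2 f2) (Comp C h f) d"
    using pb_paste[OF cat pullback_T1[OF cat P3] pullback_T1[OF cat P1]] .
  hence "pullback C a2 (Comp C k2 g2) (Comp C k g) d" using g2 Q1 B by simp
  hence P4: "pullback C g2 a2 c2 g"
    using pb_cancel[OF cat _ pullback_T1[OF cat P2] cs5] pullback_T[OF cat] by blast
  have tn: "commsq C f2 g2 h2 k2"
    unfolding commsq_def
  proof (intro conjI)
    show "f2 \<in> Arr C" "g2 \<in> Arr C" "h2 \<in> Arr C" "k2 \<in> Arr C" using Q1(1) Q2(1) Q3(1) g2(1) by auto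
    show "Dom C f2 = Dom C g2" using g2(2) by simp
    show "Cod C f2 = Dom C h2" using Q1(5) Q3(6) by simp
    show "Cod C g2 = Dom C k2" using g2(3) by simp
    show "Cod C h2 = Cod C k2" using Q1(6) Q2(6) by simp
    show "Comp C h2 f2 = Comp C k2 g2" using g2(4) by simp
  qed
  have cbn: "cube C f g h k f2 g2 h2 k2 a2 b2 c2 d"
    unfolding cube_def using cbs(1) tn pb_cs[OF cat P1] pb_cs[OF cat P2] pb_cs[OF cat P3] pb_cs[OF cat P4]
    by blast
  have poN: "pushout C f2 g2 h2 k2"
    using stab cbn po M4 P3 P4 P1 P2 unfolding M_pushouts_pullback_stable_def by blast
  have f'M: "f' \<in> M" using SM_pb[OF pb1] M4 by blast
  have g'M: "g' \<in> M" using SM_pb[OF pb2] M4 by blast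
  have h'M: "h' \<in> M" using PO_M[OF pushout_T1[OF cat top] g'M] .
  have k'M: "k' \<in> M" using PO_M[OF top f'M] .
  have f2M: "f2 \<in> M" using SM_pb[OF P3] M4 by blast
  have h2M: "h2 \<in> M" using SM_pb[OF P1] M4 by blast
  have k2M: "k2 \<in> M" using SM_pb[OF P2] M4 by blast
  obtain \<beta> where be: "\<beta> \<in> Arr C" "Dom C \<beta> = Dom C h'" "Cod C \<beta> = Dom C h2"
      "Comp C h2 \<beta> = h'" "Comp C b2 \<beta> = b"
    using pb_ex[OF cat P1, of h' b] F3 by metis
  obtain \<gamma> where ga: "\<gamma> \<in> Arr C" "Dom C \<gamma> = Dom C k'" "Cod C \<gamma> = Dom C k2"
      "Comp C k2 \<gamma> = k'" "Comp C c2 \<gamma> = c"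
    using pb_ex[OF cat P2, of k' c] F4 by metis
  have bf: "Comp C \<beta> f' \<in> Arr C" "Dom C (Comp C \<beta> f') = Dom C f'" "Cod C (Comp C \<beta> f') = Dom C b2"
    using CA be F1 F3 Q1 by auto
  have e2: "Comp C b2 (Comp C \<beta> f') = Comp C f a"
    using AS[of f' \<beta> b2] be F1 F3 Q1 by simp
  obtain \<alpha> where al: "\<alpha> \<in> Arr C" "Dom C \<alpha> = Dom C f'" "Cod C \<alpha> = Dom C f2"
      "Comp C f2 \<alpha> = Comp C \<beta> f'" "Comp C a2 \<alpha> = a"
    using pb_ex[OF cat P3 bf(1), of a] bf e2 F1 by metis
  have ga1: "Comp C g2 \<alpha> \<in> Arr C" "Cod C (Comp C g2 \<alpha>) = Dom C k2" "Dom C (Comp C g2 \<alpha>) = Dom C f'"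
    using CA g2 al by auto
  have ga2: "Comp C \<gamma> g' \<in> Arr C" "Cod C (Comp C \<gamma> g') = Dom C k2" "Dom C (Comp C \<gamma> g') = Dom C f'"
    using CA ga T F4 by auto
  have e3: "Comp C k2 (Comp C g2 \<alpha>) = Comp C k2 (Comp C \<gamma> g')"
  proof -
    have "Comp C k2 (Comp C g2 \<alpha>) = Comp C (Comp C k2 g2) \<alpha>" using AS g2 al Q2 by metis
    also have "\<dots> = Comp C (Comp C h2 f2) \<alpha>" using g2 by simp
    also have "\<dots> = Comp C h2 (Comp C f2 \<alpha>)" using AS al Q1 Q3 by metis
    also have "\<dots> = Comp C h2 (Comp C \<beta> f')" using al by simp
    also have "\<dots> = Comp C (Comp C h2 \<beta>) f'" using AS be Q1 F1 T by metis
    also have "\<dots> = Comp C k' g'" using be T by simp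
    also have "\<dots> = Comp C (Comp C k2 \<gamma>) g'" using ga by simp
    also have "\<dots> = Comp C k2 (Comp C \<gamma> g')" using AS ga Q2 T F4 by metis
    finally show ?thesis .
  qed
  have e4: "Comp C c2 (Comp C g2 \<alpha>) = Comp C c2 (Comp C \<gamma> g')"
  proof -
    have "Comp C c2 (Comp C g2 \<alpha>) = Comp C (Comp C c2 g2) \<alpha>" using AS g2 al Q2 by metis
    also have "\<dots> = Comp C (Comp C g a2) \<alpha>" using g2 by simp
    also have "\<dots> = Comp C g (Comp C a2 \<alpha>)" using AS al Q3 B by metis
    also have "\<dots> = Comp C c g'" using al F2 by simp
    also have "\<dots> = Comp C (Comp C c2 \<gamma>) g'" using ga by simp
    also have "\<dots> = Comp C c2 (Comp C \<gamma> g')" using AS ga Q2 T F4 by metis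
    finally show ?thesis .
  qed
  have gaeq: "Comp C g2 \<alpha> = Comp C \<gamma> g'"
    using pb_uniq[OF cat P2 ga1(1,2) ga2(1,2)] ga1 ga2 e3 e4 by simp
  have beM: "\<beta> \<in> M" using mono_cancel_M[OF SM_mono[OF h2M] be(1)] be h'M by simp
  have gaM: "\<gamma> \<in> M" using mono_cancel_M[OF SM_mono[OF k2M] ga(1)] ga k'M by simp
  have alM: "\<alpha> \<in> M" using mono_cancel_M[OF SM_mono[OF f2M] al(1)] al SM_comp[OF f'M beM] be F3 T by simp
  define D' where "D' = Dom C d"
  have D'O: "D' \<in> Ob C" using ar_dc[OF cat F3(3)] D'_def by blast
  note I = id_ar[OF cat D'O]
  have IM: "Id C D' \<in> M" using SM_iso iso_id[OF cat D'O] by blast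
  have cs_a: "commsq C f' \<alpha> \<beta> f2" unfolding commsq_def using al be F1 F3 T Q1 Q3 by auto
  have cs_b: "commsq C g' \<alpha> \<gamma> g2" unfolding commsq_def using al ga gaeq F1 F4 T g2 Q2 by auto
  have cs_c: "commsq C h' \<beta> (Id C D') h2" unfolding commsq_def
    using be I F3 Q1 D'_def id_l'[OF cat F3(1)] by auto
  have cs_d: "commsq C k' \<gamma> (Id C D') k2" unfolding commsq_def
    using ga I F4 Q2 D'_def id_l'[OF cat F4(1)] by auto
  have cb2: "cube C f2 g2 h2 k2 f' g' h' k' \<alpha> \<beta> \<gamma> (Id C D')"
    unfolding cube_def using po_cs[OF cat poN] cbs(2) cs_a cs_b cs_c cs_d by blast
  have pa: "pullback C f' \<alpha> \<beta> f2"
    using pb_cancel[OF cat _ P3 cs_a] pb1 al be by simp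
  have pbb: "pullback C g' \<alpha> \<gamma> g2"
    using pb_cancel[OF cat _ P4 cs_b] pb2 al ga by simp
  have "VK_wrt C (\<lambda>a b c d. a \<in> M \<and> b \<in> M \<and> c \<in> M \<and> d \<in> M) f2 g2 h2 k2"
    using VV[OF poN f2M] unfolding vertical_weak_VK_square_def .
  hence "pullback C h' \<beta> (Id C D') h2"
    unfolding VK_wrt_def using cb2 alM beM gaM IM pa pbb top by blast
  from pb_paste[OF cat this P1] show ?thesis
    using be id_r'[OF cat F3(3)] D'_def by simp
qed

lemma VK_main:
  assumes po: "pushout C f g h k" and M4: "f \<in> M" "g \<in> M" "h \<in> M" "k \<in> M"
  shows "VK_square C f g h k"
  unfolding VK_square_def VK_wrt_def
proof (intro conjI allI impI)
  show "pushout C f g h k" by (fact po)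
  fix f' g' h' k' a b c d
  assume cb: "cube C f g h k f' g' h' k' a b c d" and pb1: "pullback C f' a b f" and pb2: "pullback C g' a c g"
  show "pushout C f' g' h' k' \<longleftrightarrow> pullback C h' b d h \<and> pullback C k' c d k"
  proof
    assume top: "pushout C f' g' h' k'"
    show "pullback C h' b d h \<and> pullback C k' c d k"
    proof
      show "pullback C h' b d h" using front_pb[OF po M4 cb pb1 pb2 top] .
      show "pullback C k' c d k"
        using front_pb[OF pushout_T1[OF cat po] M4(2,1,4,3) cube_T[OF cat cb] pb2 pb1 pushout_T1[OF cat top]] .
    qed
  next
    assume "pullback C h' b d h \<and> pullback C k' c d k"
    then show "pushout C f' g' h' k'"
      using stab cb po M4 pb1 pb2 unfolding M_pushouts_pullback_stable_def by blast
  qed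
qed

end

theorem mainTheorem10:
  fixes C :: "('o, 'a) cat" and M :: "'a set"
  assumes "category C"
    and "stable_system_of_monics C M"
    and "vertical_weak_adhesive_HLR C M"
    and "M_pushouts_pullback_stable C M"
  shows "horizontal_weak_adhesive_HLR C M \<and> weak_adhesive_HLR C M"
proof -
  have H: "horizontal_weak_adhesive_HLR C M"
    unfolding horizontal_weak_adhesive_HLR_def
    using assms(3) VK_main[OF assms] unfolding vertical_weak_adhesive_HLR_def by blast
  then show ?thesis using assms(3) unfolding weak_adhesive_HLR_def by blast
qed

end
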